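(* Let $3\leq d\leq k$ be integers. Then in every connected $k$-colouring of the edges of $K_n$ there is a copy of $K_d$ whose edges receive at least $d$ distinct colours. Moreover, for all sufficiently large $n$ there exists a connected $k$-colouring of the edges of $K_n$ in which no copy of $K_d$ has edges of more than $d$ distinct colours.
   Context: A $k$-colouring of the edges of the complete graph $K_n$ (colours from $\{1,\dots,k\}$) is called connected if for each colour $i$ the edges of colour $i$ form a connected spanning subgraph of $K_n$. *)

theory Defs
  imports Main
begin

definition Kedges :: "nat \<Rightarrow> nat set set" where
  "Kedges n = {{u, v} | u v. u < n \<and> v < n \<and> u \<noteq> v}"

definition edge_colouring :: "nat \<Rightarrow> nat \<Rightarrow> (nat set \<Rightarrow> nat) \<Rightarrow> bool" where
  "edge_colouring n k c \<longleftrightarrow> (\<forall>e \<in> Kedges n. c e \<in> {1..k})"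

definition colour_class_connected :: "nat \<Rightarrow> (nat set \<Rightarrow> nat) \<Rightarrow> nat \<Rightarrow> bool" where
  "colour_class_connected n c i \<longleftrightarrow>
     (\<forall>u < n. \<forall>v < n. (\<lambda>x y. {x, y} \<in> Kedges n \<and> c {x, y} = i)\<^sup>*\<^sup>* u v)"

definition connected_colouring :: "nat \<Rightarrow> nat \<Rightarrow> (nat set \<Rightarrow> nat) \<Rightarrow> bool" where
  "connected_colouring n k c \<longleftrightarrow>
     edge_colouring n k c \<and> (\<forall>i \<in> {1..k}. colour_class_connected n c i)"

definition clique_colours :: "(nat set \<Rightarrow> nat) \<Rightarrow> nat set \<Rightarrow> nat set" where
  "clique_colours c S = c ` {e. \<exists>u v. e = {u, v} \<and> u \<in> S \<and> v \<in> S \<and> u \<noteq> v}"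

end

theory Submission
  imports Defs
begin


definition E :: "nat set \<Rightarrow> (nat set \<Rightarrow> nat) \<Rightarrow> nat \<Rightarrow> nat \<Rightarrow> nat \<Rightarrow> bool" where
  "E V col i x y \<longleftrightarrow> x \<in> V \<and> y \<in> V \<and> x \<noteq> y \<and> col {x,y} = i"

definition conn :: "nat set \<Rightarrow> (nat set \<Rightarrow> nat) \<Rightarrow> nat \<Rightarrow> bool" where
  "conn V col i \<longleftrightarrow> (\<forall>u\<in>V. \<forall>v\<in>V. (E V col i)\<^sup>*\<^sup>* u v)"

definition rbfree :: "nat set \<Rightarrow> (nat set \<Rightarrow> nat) \<Rightarrow> bool" where
  "rbfree V col \<longleftrightarrow> (\<forall>x\<in>V. \<forall>y\<in>V. \<forall>z\<in>V. x \<noteq> y \<and> y \<noteq> z \<and> x \<noteq> z \<longrightarrow>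
      \<not> (col {x,y} \<noteq> col {x,z} \<and> col {x,y} \<noteq> col {y,z} \<and> col {x,z} \<noteq> col {y,z}))"

lemma E_sym: "E V col i x y \<Longrightarrow> E V col i y x"
  unfolding E_def by (auto simp: insert_commute)

lemma sym_rtranclp:
  assumes sym: "\<And>x y. R x y \<Longrightarrow> R y x" and "R\<^sup>*\<^sup>* x y"
  shows "R\<^sup>*\<^sup>* y x"
  using assms(2)
proof (induction rule: rtranclp_induct)
  case base then show ?case by simp
next
  case (step s s')
  then show ?case by (meson converse_rtranclp_into_rtranclp sym)
qed

lemma E_rt_sym: "(E V col i)\<^sup>*\<^sup>* x y \<Longrightarrow> (E V col i)\<^sup>*\<^sup>* y x"
  by (rule sym_rtranclp[OF E_sym])

lemma first_step:
  assumes "R\<^sup>*\<^sup>* x y" "x \<noteq> y" shows "\<exists>z. R x z"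
  using assms by (metis converse_rtranclpE)

lemma conn_nb:
  assumes "conn V col i" "u \<in> V" "t \<in> V" "u \<noteq> t"
  shows "\<exists>y. y \<in> V \<and> y \<noteq> u \<and> col {u,y} = i"
proof -
  have "(E V col i)\<^sup>*\<^sup>* u t" using assms unfolding conn_def by blast
  then obtain y where "E V col i u y" using first_step assms(4) by metis
  then show ?thesis unfolding E_def by blast
qed

lemma rbfreeD:
  assumes "rbfree V col" "x \<in> V" "y \<in> V" "z \<in> V" "x \<noteq> y" "y \<noteq> z" "x \<noteq> z"
  shows "col {x,y} = col {x,z} \<or> col {x,y} = col {y,z} \<or> col {x,z} = col {y,z}"
  using assms unfolding rbfree_def by blast

lemma key:
  assumes fin: "finite V" and vV: "v \<in> V" and rb: "rbfree V col"
    and cX: "conn V col X" and cY: "conn V col Y" and cZ: "conn V col Z"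
    and XY: "X \<noteq> Y" and XZ: "X \<noteq> Z" and YZ: "Y \<noteq> Z"
    and nc: "\<not> conn (V - {v}) col X"
  shows False
proof -
  define V' where "V' = V - {v}"
  define R where "R = E V' col X"
  from nc obtain p q where pq: "p \<in> V'" "q \<in> V'" "\<not> R\<^sup>*\<^sup>* p q"
    unfolding conn_def R_def V'_def by blast
  have Rsym: "\<And>a b. R\<^sup>*\<^sup>* a b \<Longrightarrow> R\<^sup>*\<^sup>* b a" unfolding R_def by (rule E_rt_sym)
  have Rtr: "\<And>a b e. R\<^sup>*\<^sup>* a b \<Longrightarrow> R\<^sup>*\<^sup>* b e \<Longrightarrow> R\<^sup>*\<^sup>* a e" by (meson rtranclp_trans)
  have V'V: "V' \<subseteq> V" unfolding V'_def by blast
  have pv: "p \<noteq> v" "p \<in> V" using pq(1) unfolding V'_def by auto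
  obtain y where y: "y \<in> V" "y \<noteq> v" "col {v,y} = Y" using conn_nb[OF cY vV pv(2)] pv(1) by metis
  obtain z where z: "z \<in> V" "z \<noteq> v" "col {v,z} = Z" using conn_nb[OF cZ vV pv(2)] pv(1) by metis
  have yV': "y \<in> V'" "z \<in> V'" using y z unfolding V'_def by auto
  have F2: "\<exists>x. x \<in> V' \<and> R\<^sup>*\<^sup>* t x \<and> col {v,x} = X" if tV: "t \<in> V'" for t
  proof -
    have path: "(E V col X)\<^sup>*\<^sup>* t v" using cX tV vV unfolding conn_def V'_def by blast
    have "\<And>s. (E V col X)\<^sup>*\<^sup>* t s \<Longrightarrow> (R\<^sup>*\<^sup>* t s \<and> s \<in> V') \<or> (\<exists>x. x \<in> V' \<and> R\<^sup>*\<^sup>* t x \<and> col {v,x} = X)"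
    proof -
      fix s assume "(E V col X)\<^sup>*\<^sup>* t s"
      then show "(R\<^sup>*\<^sup>* t s \<and> s \<in> V') \<or> (\<exists>x. x \<in> V' \<and> R\<^sup>*\<^sup>* t x \<and> col {v,x} = X)"
      proof (induction rule: rtranclp_induct)
        case base then show ?case using tV by simp
      next
        case (step s s')
        show ?case
        proof (cases "R\<^sup>*\<^sup>* t s \<and> s \<in> V'")
          case True
          show ?thesis
          proof (cases "s' = v")
            case True
            then have "col {v,s} = X" using step(2) unfolding E_def by (auto simp: insert_commute)
            then show ?thesis using \<open>R\<^sup>*\<^sup>* t s \<and> s \<in> V'\<close> by blast
          next
            case False
            then have "s' \<in> V'" "R s s'" using step(2) True unfolding E_def R_def V'_def by auto
            then show ?thesis using True by (meson rtranclp.rtrancl_into_rtrancl)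
          qed
        next
          case False then show ?thesis using step(3) by blast
        qed
      qed
    qed
    from this[OF path] show ?thesis unfolding V'_def by blast
  qed
  have F3: "col {pp,s} = col {pp,s'}" if "R\<^sup>*\<^sup>* s s'" "pp \<in> V'" "\<not> R\<^sup>*\<^sup>* s pp" for s s' pp
    using that
  proof (induction rule: rtranclp_induct)
    case base then show ?case by simp
  next
    case (step s1 s2)
    have e: "R s1 s2" by fact
    have s12: "s1 \<in> V'" "s2 \<in> V'" "s1 \<noteq> s2" "col {s1,s2} = X" using e unfolding R_def E_def by auto
    have n1: "pp \<noteq> s1" using step by blast
    have n2: "pp \<noteq> s2" using step by (meson rtranclp.rtrancl_into_rtrancl)
    have c1: "col {pp,s1} \<noteq> X"
    proof
      assume "col {pp,s1} = X"
      then have "R s1 pp" using s12 n1 step(4) unfolding R_def E_def by (auto simp: insert_commute)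
      then show False using step by (meson rtranclp.rtrancl_into_rtrancl)
    qed
    have c2: "col {pp,s2} \<noteq> X"
    proof
      assume "col {pp,s2} = X"
      then have "R s2 pp" using s12 n2 step(4) unfolding R_def E_def by (auto simp: insert_commute)
      then show False using step by (meson rtranclp.rtrancl_into_rtrancl)
    qed
    have "col {pp,s1} = col {pp,s2} \<or> col {pp,s1} = col {s1,s2} \<or> col {pp,s2} = col {s1,s2}"
      using rbfreeD[OF rb, of pp s1 s2] s12 n1 n2 step(4) V'V by blast
    then show ?case using step(3)[OF step(4,5)] c1 c2 s12(4) by auto
  qed
  have F4: "col {w,t} = W" if H: "y0 \<in> V'" "col {v,y0} = W" "W \<noteq> X" "w \<in> V'" "t \<in> V'"
     "R\<^sup>*\<^sup>* y0 w" "\<not> R\<^sup>*\<^sup>* y0 t" for y0 W w t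
  proof -
    obtain x where x: "x \<in> V'" "R\<^sup>*\<^sup>* t x" "col {v,x} = X" using F2[OF H(5)] by blast
    have nyx: "\<not> R\<^sup>*\<^sup>* y0 x" using x(2) H(7) Rsym Rtr by blast
    have xy: "x \<noteq> y0" using nyx by blast
    have cxy: "col {x,y0} \<noteq> X"
    proof
      assume "col {x,y0} = X"
      then have "R y0 x" using xy x(1) H(1) unfolding R_def E_def by (auto simp: insert_commute)
      then show False using nyx by blast
    qed
    have vx: "v \<noteq> x" "v \<noteq> y0" using x(1) H(1) unfolding V'_def by auto
    have "col {v,x} = col {v,y0} \<or> col {v,x} = col {x,y0} \<or> col {v,y0} = col {x,y0}"
      using rbfreeD[OF rb, of v x y0] vx xy vV x(1) H(1) V'V by blast
    then have cy: "col {x,y0} = W" using x(3) H(2,3) cxy by auto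
    have "col {y0,x} = col {y0,t}"
      using F3[of x t y0] Rsym x(2) H(1) nyx by blast
    then have "col {y0,t} = W" using cy by (simp add: insert_commute)
    moreover have "col {t,y0} = col {t,w}" using F3[of y0 w t] H by blast
    ultimately show ?thesis by (simp add: insert_commute)
  qed
  show False
  proof (cases "R\<^sup>*\<^sup>* y z")
    case False
    have "col {y,z} = Y" using F4[of y Y y z] yV' y(3) XY False by auto
    moreover have "col {z,y} = Z" using F4[of z Z z y] yV' z(3) XZ False Rsym by auto
    ultimately show False using YZ by (simp add: insert_commute)
  next
    case True
    obtain t where t: "t \<in> V'" "\<not> R\<^sup>*\<^sup>* y t" using pq Rsym Rtr by blast
    have "col {y,t} = Y" using F4[of y Y y t] yV' y(3) XY t by auto
    moreover have "col {y,t} = Z" using F4[of z Z y t] yV' z(3) XZ t True Rsym Rtr by blast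
    ultimately show False using YZ by simp
  qed
qed



lemma rbfree_sub: "rbfree V col \<Longrightarrow> W \<subseteq> V \<Longrightarrow> rbfree W col"
  unfolding rbfree_def by blast

lemma rainbow_main:
  assumes "finite V" "2 \<le> card V" "a \<noteq> b" "a \<noteq> c" "b \<noteq> c"
    "conn V col a" "conn V col b" "conn V col c"
  shows "\<not> rbfree V col"
  using assms
proof (induction "card V" arbitrary: V rule: less_induct)
  case less
  show ?case
  proof (cases "card V = 2")
    case True
    then obtain x y where xy: "x \<noteq> y" "V = {x,y}" by (meson card_2_iff)
    have "\<And>i. conn V col i \<Longrightarrow> col {x,y} = i"
    proof -
      fix i assume "conn V col i"
      then obtain z where "z \<in> V" "z \<noteq> x" "col {x,z} = i" using conn_nb[of V col i x y] xy by auto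
      then show "col {x,y} = i" using xy by auto
    qed
    then show ?thesis using less by metis
  next
    case False
    then have c3: "3 \<le> card V" using less by linarith
    then obtain v where vV: "v \<in> V" by (metis card.empty empty_iff not_numeral_le_zero ex_in_conv)
    have cV': "card (V - {v}) = card V - 1" using vV less by simp
    show ?thesis
    proof
      assume rb: "rbfree V col"
      have rb': "rbfree (V - {v}) col" using rbfree_sub[OF rb] by blast
      show False
      proof (cases "conn (V - {v}) col a \<and> conn (V - {v}) col b \<and> conn (V - {v}) col c")
        case True
        then show False using less(1)[of "V - {v}"] cV' c3 less rb' by force
      next
        case False
        then show False
          using key[OF less(2) vV rb, of a b c] key[OF less(2) vV rb, of b a c]
             key[OF less(2) vV rb, of c a b] less by metis
      qed
    qed
  qed
qed

lemma Kedges_iff: "{x,y} \<in> Kedges n \<longleftrightarrow> x < n \<and> y < n \<and> x \<noteq> y"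
  unfolding Kedges_def by (auto simp: doubleton_eq_iff)

lemma cc_conn:
  assumes "connected_colouring n k c" "i \<in> {1..k}"
  shows "conn {..<n} c i"
proof -
  have "(\<lambda>x y. {x, y} \<in> Kedges n \<and> c {x, y} = i) = E {..<n} c i"
    by (auto simp: fun_eq_iff E_def Kedges_iff)
  moreover have "\<forall>u<n. \<forall>v<n. (\<lambda>x y. {x, y} \<in> Kedges n \<and> c {x, y} = i)\<^sup>*\<^sup>* u v"
    using assms unfolding connected_colouring_def colour_class_connected_def by blast
  ultimately show ?thesis unfolding conn_def by auto
qed

lemma cc_fin: "finite S \<Longrightarrow> finite (clique_colours c S)"
proof -
  assume "finite S"
  have "{e. \<exists>u v. e = {u, v} \<and> u \<in> S \<and> v \<in> S \<and> u \<noteq> v} \<subseteq> Pow S" by auto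
  then show ?thesis unfolding clique_colours_def using \<open>finite S\<close>
    by (meson finite_Pow_iff finite_imageI finite_subset)
qed

lemma cc_mono: "S \<subseteq> T \<Longrightarrow> clique_colours c S \<subseteq> clique_colours c T"
  unfolding clique_colours_def by blast

lemma cc_mem: "u \<in> S \<Longrightarrow> v \<in> S \<Longrightarrow> u \<noteq> v \<Longrightarrow> c {u,v} \<in> clique_colours c S"
  unfolding clique_colours_def by blast

lemma cc_sub:
  assumes "edge_colouring n k c" "S \<subseteq> {..<n}"
  shows "clique_colours c S \<subseteq> {1..k}"
proof
  fix x assume "x \<in> clique_colours c S"
  then obtain u v where "x = c {u,v}" "u \<in> S" "v \<in> S" "u \<noteq> v" unfolding clique_colours_def by blast
  then have "{u,v} \<in> Kedges n" using assms(2) Kedges_iff by blast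
  then show "x \<in> {1..k}" using assms(1) \<open>x = c {u,v}\<close> unfolding edge_colouring_def by blast
qed

lemma k_lt_n:
  assumes "connected_colouring n k c" "2 \<le> n"
  shows "k < n"
proof -
  have "\<forall>i\<in>{1..k}. \<exists>y. y \<in> {..<n} \<and> y \<noteq> 0 \<and> c {0,y} = i"
    using cc_conn[OF assms(1)] conn_nb[of "{..<n}" c _ 0 1] assms(2) by auto
  then obtain g where g: "\<And>i. i \<in> {1..k} \<Longrightarrow> g i \<in> {..<n} \<and> g i \<noteq> 0 \<and> c {0, g i} = i"
    by metis
  have "inj_on g {1..k}" by (metis g inj_onI)
  moreover have "g ` {1..k} \<subseteq> {1..<n}" using g by fastforce
  ultimately have "card {1..k} \<le> card {1..<n}" by (meson card_inj_on_le finite_atLeastLessThan)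
  then show ?thesis using assms by simp
qed



lemma part1:
  assumes d3: "3 \<le> d" and dk: "d \<le> k" and n2: "2 \<le> n" and cc: "connected_colouring n k c"
  shows "\<exists>S \<subseteq> {..<n}. card S = d \<and> card (clique_colours c S) \<ge> d"
proof -
  have ec: "edge_colouring n k c" using cc unfolding connected_colouring_def by blast
  have kn: "k < n" using k_lt_n[OF cc n2] .
  have "\<not> rbfree {..<n} c"
    using rainbow_main[of "{..<n}" 1 2 3 c] cc_conn[OF cc] n2 d3 dk by auto
  then obtain x y z where xyz: "x < n" "y < n" "z < n" "x \<noteq> y" "y \<noteq> z" "x \<noteq> z"
     "c {x,y} \<noteq> c {x,z}" "c {x,y} \<noteq> c {y,z}" "c {x,z} \<noteq> c {y,z}"
    unfolding rbfree_def by blast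
  have base: "\<exists>S \<subseteq> {..<n}. card S = 3 \<and> 3 \<le> card (clique_colours c S)"
  proof (intro exI conjI)
    show "{x,y,z} \<subseteq> {..<n}" using xyz by auto
    show "card {x,y,z} = 3" using xyz by auto
    have "{c {x,y}, c {x,z}, c {y,z}} \<subseteq> clique_colours c {x,y,z}"
      using cc_mem[of _ "{x,y,z}"] xyz by auto
    moreover have "card {c {x,y}, c {x,z}, c {y,z}} = 3" using xyz by auto
    ultimately show "3 \<le> card (clique_colours c {x,y,z})"
      by (metis card_mono cc_fin finite.emptyI finite.insertI)
  qed
  have grow: "3 \<le> m \<Longrightarrow> m \<le> d \<Longrightarrow> \<exists>S \<subseteq> {..<n}. card S = m \<and> m \<le> card (clique_colours c S)" for m
  proof (induction m)
    case 0 then show ?case by simp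
  next
    case (Suc m)
    show ?case
    proof (cases "m < 3")
      case True
      then have "Suc m = 3" using Suc by simp
      then show ?thesis using base by simp
    next
      case False
      then obtain S where S: "S \<subseteq> {..<n}" "card S = m" "m \<le> card (clique_colours c S)"
        using Suc by auto
      have finS: "finite S" using S(1) finite_subset by blast
      have fC: "finite (clique_colours c S)" using cc_fin[OF finS] .
      have mk: "m < k" using Suc dk by simp
      show ?thesis
      proof (cases "card (clique_colours c S) < k")
        case True
        have "\<not> {1..k} \<subseteq> clique_colours c S"
          using True by (metis card_atLeastAtMost card_mono diff_Suc_1 fC not_le)
        then obtain i where i: "i \<in> {1..k}" "i \<notin> clique_colours c S" by blast
        have Sne: "S \<noteq> {}" using S False by auto
        then obtain u where u: "u \<in> S" by blast
        have un: "u < n" using u S by auto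
        obtain t where t: "t < n" "t \<noteq> u"
        proof (cases "u = 0")
          case True then show ?thesis using that[of 1] n2 by simp
        next
          case False then show ?thesis using that[of 0] n2 by simp
        qed
        obtain w where w: "w \<in> {..<n}" "w \<noteq> u" "c {u,w} = i"
          using conn_nb[OF cc_conn[OF cc i(1)], of u t] t un by auto
        have wS: "w \<notin> S" using w i(2) cc_mem[OF u, of w c] by auto
        let ?T = "insert w S"
        have "insert i (clique_colours c S) \<subseteq> clique_colours c ?T"
          using cc_mono[of S ?T c] cc_mem[of u ?T w c] u w by auto
        moreover have "card (insert i (clique_colours c S)) = Suc (card (clique_colours c S))"
          using i(2) fC by simp
        ultimately have "Suc m \<le> card (clique_colours c ?T)"
          using S(3) cc_fin[of ?T c] finS card_mono by (metis Suc_le_mono finite_insert le_trans)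
        then show ?thesis using S finS wS w by (intro exI[of _ ?T]) auto
      next
        case False
        have "S \<noteq> {..<n}" using S(2) mk kn by auto
        then obtain w where w: "w < n" "w \<notin> S" using S(1) by auto
        let ?T = "insert w S"
        have "card (clique_colours c S) \<le> card (clique_colours c ?T)"
          using cc_mono[of S ?T c] cc_fin[of ?T c] finS by (meson card_mono finite_insert subset_insertI)
        then have "Suc m \<le> card (clique_colours c ?T)" using False mk by linarith
        then show ?thesis using S finS w by (intro exI[of _ ?T]) auto
      qed
    qed
  qed
  show ?thesis using grow[OF d3 order_refl] .
qed



definition fcol :: "nat \<Rightarrow> nat \<Rightarrow> nat" where "fcol k x = x mod k + 1"
definition cons_col :: "nat \<Rightarrow> nat set \<Rightarrow> nat" where
  "cons_col k e = (if Min e < k \<and> 2*k \<le> Max e then fcol k (Max e) else fcol k (Min e))"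

lemma cons_col_pair: "cons_col k {x,y} = (if min x y < k \<and> 2*k \<le> max x y then fcol k (max x y) else fcol k (min x y))"
  unfolding cons_col_def by simp

lemma cons_col_in: "cons_col k {x,y} \<in> {fcol k x, fcol k y}"
  unfolding cons_col_pair by (auto simp: min_def max_def)

lemma part2:
  assumes k1: "1 \<le> k" and n: "3*k \<le> n"
  shows "connected_colouring n k (cons_col k) \<and>
     (\<forall>S \<subseteq> {..<n}. card S = d \<longrightarrow> card (clique_colours (cons_col k) S) \<le> d)"
proof (intro conjI allI impI)
  show "card (clique_colours (cons_col k) S) \<le> d" if "S \<subseteq> {..<n}" "card S = d" for S
  proof -
    have fin: "finite S" using that finite_subset by blast
    have "clique_colours (cons_col k) S \<subseteq> fcol k ` S"
      unfolding clique_colours_def using cons_col_in by fastforce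
    then have "card (clique_colours (cons_col k) S) \<le> card (fcol k ` S)"
      using fin by (simp add: card_mono)
    also have "\<dots> \<le> card S" using fin card_image_le by blast
    finally show ?thesis using that by simp
  qed
  have ec: "edge_colouring n k (cons_col k)"
    unfolding edge_colouring_def cons_col_def fcol_def using k1 by (auto simp: less_Suc_eq_le[symmetric])
  have conn: "colour_class_connected n (cons_col k) i" if i: "i \<in> {1..k}" for i
  proof -
    define R where "R = (\<lambda>x y. {x, y} \<in> Kedges n \<and> cons_col k {x, y} = i)"
    have Redge: "R x y" if "x < n" "y < n" "x \<noteq> y" "cons_col k {x,y} = i" for x y
      using that unfolding R_def by (simp add: Kedges_iff)
    have Rsym: "R x y \<Longrightarrow> R y x" for x y unfolding R_def by (simp add: insert_commute)
    define a where "a = i - 1"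
    define b where "b = k + i - 1"
    define h where "h = 2*k + i - 1"
    obtain j where j: "i = Suc j" "j < k" using i by (cases i) auto
    have fa: "fcol k a = i" "fcol k b = i" "fcol k h = i"
      unfolding fcol_def a_def b_def h_def j(1) using j(2) by auto
    have abh: "a < k" "k \<le> b" "b < 2*k" "2*k \<le> h" "h < n" using i n unfolding a_def b_def h_def by auto
    have ba: "R b a" using abh fa by (intro Redge) (auto simp: cons_col_pair)
    have hb: "R h b" using abh fa by (intro Redge) (auto simp: cons_col_pair)
    have toa: "R\<^sup>*\<^sup>* u a" if "u < n" for u
    proof -
      consider "u < k" | "k \<le> u \<and> u < 2*k" | "2*k \<le> u" by linarith
      then show ?thesis
      proof cases
        case 1
        show ?thesis
        proof (cases "u = a")
          case True then show ?thesis by simp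
        next
          case False
          have "R u h" using 1 abh fa that by (intro Redge) (auto simp: cons_col_pair)
          then show ?thesis using hb ba by (meson converse_rtranclp_into_rtranclp rtranclp.rtrancl_refl)
        qed
      next
        case 2
        have "R u a" using 2 abh fa that by (intro Redge) (auto simp: cons_col_pair)
        then show ?thesis by blast
      next
        case 3
        have "R u b" using 3 abh fa that by (intro Redge) (auto simp: cons_col_pair)
        then show ?thesis using ba by (meson converse_rtranclp_into_rtranclp rtranclp.rtrancl_refl)
      qed
    qed
    show ?thesis unfolding colour_class_connected_def R_def[symmetric]
    proof (intro allI impI)
      fix u v assume "u < n" "v < n"
      then show "R\<^sup>*\<^sup>* u v" using toa sym_rtranclp[of R, OF Rsym, of v a]
        by (meson rtranclp_trans)
    qed
  qed
  show "connected_colouring n k (cons_col k)"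
    unfolding connected_colouring_def using ec conn by blast
qed


theorem proposition14:
  fixes d k :: nat
  assumes "3 \<le> d" and "d \<le> k"
  shows "(\<forall>n \<ge> 2. \<forall>c. connected_colouring n k c \<longrightarrow>
            (\<exists>S \<subseteq> {..<n}. card S = d \<and> card (clique_colours c S) \<ge> d))
       \<and> (\<exists>N. \<forall>n \<ge> N. \<exists>c. connected_colouring n k c \<and>
            (\<forall>S \<subseteq> {..<n}. card S = d \<longrightarrow> card (clique_colours c S) \<le> d))"
proof
  show "\<forall>n \<ge> 2. \<forall>c. connected_colouring n k c \<longrightarrow>
            (\<exists>S \<subseteq> {..<n}. card S = d \<and> card (clique_colours c S) \<ge> d)"
    using part1[OF assms] by blast
  show "\<exists>N. \<forall>n \<ge> N. \<exists>c. connected_colouring n k c \<and>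
            (\<forall>S \<subseteq> {..<n}. card S = d \<longrightarrow> card (clique_colours c S) \<le> d)"
  proof (rule exI[of _ "3*k"], intro allI impI)
    fix n assume "3*k \<le> n"
    then show "\<exists>c. connected_colouring n k c \<and>
            (\<forall>S \<subseteq> {..<n}. card S = d \<longrightarrow> card (clique_colours c S) \<le> d)"
      using part2[of k n d] assms by auto
  qed
qed

end
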